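(* Every KW-complex is a Hausdorff space.
   Context: A KW-complex is a topological space $X$ built as follows: $X^0$ is a disjoint union of compact Hausdorff spaces; for $n\ge1$, $X^n$ is the pushout in the category of all topological spaces of $X^{n-1}\leftarrow\partial\Delta_n\times Y_n\to\Delta_n\times Y_n$ for some continuous attaching map and some $Y_n$ that is a disjoint union of compact Hausdorff spaces ($\Delta_n$ the topological $n$-simplex, $\partial\Delta_n$ its boundary, the right map the inclusion); and $X=\operatorname{colim}_nX^n$ in topological spaces. *)

theory Defs
  imports "HOL-Analysis.Analysis" "HOL-Homology.Simplices"
begin

text \<open>Y is (homeomorphic, via the canonical map, to) the topological disjoint union
  of a family of subspaces, each of which is compact Hausdorff.\<close>
definition disjoint_union_compact_Hausdorff :: "'a topology \<Rightarrow> bool" where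
  "disjoint_union_compact_Hausdorff Y \<longleftrightarrow>
     (\<exists>\<C>. homeomorphic_map (sum_topology (subtopology Y) \<C>) Y snd \<and>
          (\<forall>C\<in>\<C>. compact_space (subtopology Y C) \<and> Hausdorff_space (subtopology Y C)))"

definition simplex_top :: "nat \<Rightarrow> (nat \<Rightarrow> real) topology" where
  "simplex_top n = subtopology (powertop_real UNIV) (standard_simplex n)"

definition simplex_boundary :: "nat \<Rightarrow> (nat \<Rightarrow> real) set" where
  "simplex_boundary n = {x \<in> standard_simplex n. \<exists>i\<le>n. x i = 0}"

text \<open>Z (with maps i : C \<rightarrow> Z, j : B \<rightarrow> Z) is a pushout in Top of
  C <-f- A \<subseteq> B (A a subspace of B, right map the inclusion):
  Z carries the quotient topology of the disjoint union C + B along [i,j], and the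
  fibres of [i,j] are exactly the classes of the equivalence relation generated by
  Inl (f a) ~ Inr a for a \<in> A.\<close>
definition top_pushout ::
  "'c topology \<Rightarrow> 'b topology \<Rightarrow> 'b set \<Rightarrow> ('b \<Rightarrow> 'c) \<Rightarrow> 'z topology \<Rightarrow> ('c \<Rightarrow> 'z) \<Rightarrow> ('b \<Rightarrow> 'z) \<Rightarrow> bool"
where
  "top_pushout C B A f Z i j \<longleftrightarrow>
     continuous_map C Z i \<and> continuous_map B Z j \<and>
     (\<forall>a\<in>A. i (f a) = j a) \<and>
     topspace Z = i ` topspace C \<union> j ` topspace B \<and>
     (\<forall>U. U \<subseteq> topspace Z \<longrightarrow>
        (openin Z U \<longleftrightarrow> openin C {x \<in> topspace C. i x \<in> U} \<and> openin B {x \<in> topspace B. j x \<in> U})) \<and>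
     (\<forall>u \<in> topspace C <+> topspace B. \<forall>v \<in> topspace C <+> topspace B.
        case_sum i j u = case_sum i j v \<longleftrightarrow>
        equivclp (\<lambda>u v. \<exists>a\<in>A. u = Inl (f a) \<and> v = Inr a) u v)"

fun chain_map :: "(nat \<Rightarrow> 'a \<Rightarrow> 'a) \<Rightarrow> nat \<Rightarrow> nat \<Rightarrow> 'a \<Rightarrow> 'a" where
  "chain_map i n 0 = id"
| "chain_map i n (Suc d) = i (Suc (n + d)) \<circ> chain_map i n d"

text \<open>Xc with maps \<iota> n : X n \<rightarrow> Xc is the colimit in Top of the sequence
  X 0 -i 1-> X 1 -i 2-> X 2 -> ...\<close>
definition top_seq_colimit ::
  "(nat \<Rightarrow> 'a topology) \<Rightarrow> (nat \<Rightarrow> 'a \<Rightarrow> 'a) \<Rightarrow> 'c topology \<Rightarrow> (nat \<Rightarrow> 'a \<Rightarrow> 'c) \<Rightarrow> bool"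
where
  "top_seq_colimit X i Xc \<iota> \<longleftrightarrow>
     (\<forall>n. continuous_map (X n) Xc (\<iota> n)) \<and>
     (\<forall>n. \<forall>x\<in>topspace (X n). \<iota> (Suc n) (i (Suc n) x) = \<iota> n x) \<and>
     topspace Xc = (\<Union>n. \<iota> n ` topspace (X n)) \<and>
     (\<forall>n m x y. x \<in> topspace (X n) \<longrightarrow> y \<in> topspace (X m) \<longrightarrow> \<iota> n x = \<iota> m y \<longrightarrow>
        (\<exists>d e. n + d = m + e \<and> chain_map i n d x = chain_map i m e y)) \<and>
     (\<forall>U. U \<subseteq> topspace Xc \<longrightarrow>
        (openin Xc U \<longleftrightarrow> (\<forall>n. openin (X n) {x \<in> topspace (X n). \<iota> n x \<in> U})))"

text \<open>Cell structure data of a KW-complex: X 0 a disjoint union of compact Hausdorff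
  spaces; X (n+1) the pushout of X n <-f- \<partial>\<Delta>_(n+1) \<times> Y (n+1) \<subseteq> \<Delta>_(n+1) \<times> Y (n+1)
  with f continuous and Y (n+1) a disjoint union of compact Hausdorff spaces.\<close>
definition KW_cell_data ::
  "(nat \<Rightarrow> 'a topology) \<Rightarrow> (nat \<Rightarrow> 'b topology) \<Rightarrow> (nat \<Rightarrow> (nat \<Rightarrow> real) \<times> 'b \<Rightarrow> 'a)
   \<Rightarrow> (nat \<Rightarrow> 'a \<Rightarrow> 'a) \<Rightarrow> (nat \<Rightarrow> (nat \<Rightarrow> real) \<times> 'b \<Rightarrow> 'a) \<Rightarrow> bool"
where
  "KW_cell_data X Y f i \<Phi> \<longleftrightarrow>
     disjoint_union_compact_Hausdorff (X 0) \<and>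
     (\<forall>n. disjoint_union_compact_Hausdorff (Y (Suc n)) \<and>
          continuous_map
            (subtopology (prod_topology (simplex_top (Suc n)) (Y (Suc n)))
                         (simplex_boundary (Suc n) \<times> topspace (Y (Suc n))))
            (X n) (f (Suc n)) \<and>
          top_pushout (X n) (prod_topology (simplex_top (Suc n)) (Y (Suc n)))
            (simplex_boundary (Suc n) \<times> topspace (Y (Suc n))) (f (Suc n))
            (X (Suc n)) (i (Suc n)) (\<Phi> (Suc n)))"

end

theory Submission
  imports Defs
begin


lemma clopen_partition_normal_Hausdorff:
  assumes op: "\<And>C. C \<in> \<C> \<Longrightarrow> openin X C"
    and cov: "topspace X \<subseteq> \<Union>\<C>"
    and dis: "\<And>C D. C \<in> \<C> \<Longrightarrow> D \<in> \<C> \<Longrightarrow> C \<noteq> D \<Longrightarrow> C \<inter> D = {}"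
    and nor: "\<And>C. C \<in> \<C> \<Longrightarrow> normal_space (subtopology X C) \<and> Hausdorff_space (subtopology X C)"
  shows "normal_space X \<and> Hausdorff_space X"
proof
  show "Hausdorff_space X"
    unfolding Hausdorff_space_def
  proof clarify
    fix x y assume x: "x \<in> topspace X" and y: "y \<in> topspace X" and "x \<noteq> y"
    obtain C D where C: "C \<in> \<C>" "x \<in> C" and D: "D \<in> \<C>" "y \<in> D" using cov x y by blast
    show "\<exists>U V. openin X U \<and> openin X V \<and> x \<in> U \<and> y \<in> V \<and> disjnt U V"
    proof (cases "C = D")
      case True
      then have H: "Hausdorff_space (subtopology X C)" using nor C by blast
      have xs: "x \<in> topspace (subtopology X C)" using x C by simp
      have ys: "y \<in> topspace (subtopology X C)" using y D True by simp
      obtain U V where UV: "openin (subtopology X C) U" "openin (subtopology X C) V" "x \<in> U" "y \<in> V" "disjnt U V"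
        using H xs ys \<open>x \<noteq> y\<close> unfolding Hausdorff_space_def by blast
      have "openin X U" "openin X V" using UV openin_trans_full op C by blast+
      then show ?thesis using UV by blast
    next
      case False
      then have "disjnt C D" using dis C D by (simp add: disjnt_def)
      then show ?thesis using op C D by blast
    qed
  qed
  show "normal_space X"
    unfolding normal_space_def
  proof clarify
    fix S T assume S: "closedin X S" and T: "closedin X T" and "disjnt S T"
    define P where "P C U V \<longleftrightarrow> openin (subtopology X C) U \<and> openin (subtopology X C) V \<and> S \<inter> C \<subseteq> U \<and> T \<inter> C \<subseteq> V \<and> disjnt U V" for C U V
    have ex: "\<exists>U V. P C U V" if C: "C \<in> \<C>" for C
    proof -
      have "closedin (subtopology X C) (C \<inter> S)" "closedin (subtopology X C) (C \<inter> T)"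
        using S T closedin_subtopology_Int_closed by blast+
      moreover have "disjnt (C \<inter> S) (C \<inter> T)" using \<open>disjnt S T\<close> by (auto simp: disjnt_def)
      ultimately obtain U V where "openin (subtopology X C) U" "openin (subtopology X C) V" "C \<inter> S \<subseteq> U" "C \<inter> T \<subseteq> V" "disjnt U V"
        using nor[OF C] unfolding normal_space_def by meson
      then have "P C U V" unfolding P_def by (simp add: Int_commute)
      then show ?thesis by blast
    qed
    obtain U V where UV0: "\<And>C. C \<in> \<C> \<Longrightarrow> P C (U C) (V C)"
      using ex by metis
    then have UV: "\<And>C. C \<in> \<C> \<Longrightarrow> openin (subtopology X C) (U C) \<and> openin (subtopology X C) (V C) \<and> S \<inter> C \<subseteq> U C \<and> T \<inter> C \<subseteq> V C \<and> disjnt (U C) (V C)"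
      unfolding P_def by blast
    show "\<exists>U V. openin X U \<and> openin X V \<and> S \<subseteq> U \<and> T \<subseteq> V \<and> disjnt U V"
    proof (intro exI conjI)
      show "openin X (\<Union>C\<in>\<C>. U C)"
        by (rule openin_Union) (use UV op openin_trans_full in blast)
      show "openin X (\<Union>C\<in>\<C>. V C)"
        by (rule openin_Union) (use UV op openin_trans_full in blast)
      show "S \<subseteq> (\<Union>C\<in>\<C>. U C)"
      proof
        fix x assume "x \<in> S"
        then have "x \<in> topspace X" using S closedin_subset by blast
        then obtain C where "C \<in> \<C>" "x \<in> C" using cov by blast
        then have "x \<in> U C" using UV \<open>x \<in> S\<close> by blast
        then show "x \<in> (\<Union>C\<in>\<C>. U C)" using \<open>C \<in> \<C>\<close> by blast
      qed
      show "T \<subseteq> (\<Union>C\<in>\<C>. V C)"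
      proof
        fix x assume "x \<in> T"
        then have "x \<in> topspace X" using T closedin_subset by blast
        then obtain C where "C \<in> \<C>" "x \<in> C" using cov by blast
        then have "x \<in> V C" using UV \<open>x \<in> T\<close> by blast
        then show "x \<in> (\<Union>C\<in>\<C>. V C)" using \<open>C \<in> \<C>\<close> by blast
      qed
      have sub: "U C \<subseteq> C" "V C \<subseteq> C" if "C \<in> \<C>" for C
      proof -
        have "openin (subtopology X C) (U C)" "openin (subtopology X C) (V C)" using UV[OF that] by auto
        then show "U C \<subseteq> C" "V C \<subseteq> C" by (auto simp: openin_subtopology)
      qed
      show "disjnt (\<Union>C\<in>\<C>. U C) (\<Union>C\<in>\<C>. V C)"
        unfolding disjnt_def
      proof (rule ccontr)
        assume "(\<Union>C\<in>\<C>. U C) \<inter> (\<Union>C\<in>\<C>. V C) \<noteq> {}"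
        then obtain x C D where CD: "C \<in> \<C>" "D \<in> \<C>" "x \<in> U C" "x \<in> V D" by blast
        then have "x \<in> C" "x \<in> D" using sub by blast+
        then have "C = D" using dis CD by blast
        then have "disjnt (U C) (V C)" using UV CD by blast
        then show False using CD \<open>C = D\<close> by (auto simp: disjnt_def)
      qed
    qed
  qed
qed

lemma disjoint_union_partition:
  assumes "disjoint_union_compact_Hausdorff Y"
  obtains \<C> where "\<And>C. C \<in> \<C> \<Longrightarrow> openin Y C" "topspace Y \<subseteq> \<Union>\<C>"
    "\<And>C D. C \<in> \<C> \<Longrightarrow> D \<in> \<C> \<Longrightarrow> C \<noteq> D \<Longrightarrow> C \<inter> D = {}"
    "\<And>C. C \<in> \<C> \<Longrightarrow> C \<subseteq> topspace Y \<and> compact_space (subtopology Y C) \<and> Hausdorff_space (subtopology Y C)"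
proof -
  obtain \<D> where h: "homeomorphic_map (sum_topology (subtopology Y) \<D>) Y snd"
    and ch: "\<forall>C\<in>\<D>. compact_space (subtopology Y C) \<and> Hausdorff_space (subtopology Y C)"
    using assms unfolding disjoint_union_compact_Hausdorff_def by blast
  define \<C> where "\<C> = (\<lambda>C. C \<inter> topspace Y) ` \<D>"
  have om: "open_map (sum_topology (subtopology Y) \<D>) Y snd" and inj: "inj_on snd (topspace (sum_topology (subtopology Y) \<D>))"
    and im: "snd ` topspace (sum_topology (subtopology Y) \<D>) = topspace Y"
    using h homeomorphic_imp_open_map homeomorphic_imp_injective_map homeomorphic_imp_surjective_map by blast+
  show ?thesis
  proof
    fix C assume "C \<in> \<C>"
    then obtain D where D: "D \<in> \<D>" "C = D \<inter> topspace Y" by (auto simp: \<C>_def)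
    have "openin (sum_topology (subtopology Y) \<D>) ({D} \<times> (D \<inter> topspace Y))"
      unfolding openin_sum_topology
    proof (intro conjI ballI)
      fix i assume "i \<in> \<D>"
      show "openin (subtopology Y i) {x. (i, x) \<in> {D} \<times> (D \<inter> topspace Y)}"
      proof (cases "i = D")
        case True
        then have "{x. (i, x) \<in> {D} \<times> (D \<inter> topspace Y)} = topspace (subtopology Y i)" by auto
        then show ?thesis by (simp only: openin_topspace)
      qed simp
    qed (use D in auto)
    then have "openin Y (snd ` ({D} \<times> (D \<inter> topspace Y)))" using om[unfolded open_map_def, rule_format] by blast
    moreover have "snd ` ({D} \<times> (D \<inter> topspace Y)) = D \<inter> topspace Y" by (simp only: snd_image_times) simp
    ultimately show "openin Y C" using D(2) by simp
  next
    show "topspace Y \<subseteq> \<Union>\<C>"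
    proof
      fix x assume x: "x \<in> topspace Y"
      then have "x \<in> snd ` topspace (sum_topology (subtopology Y) \<D>)" using im by simp
      then obtain D where "D \<in> \<D>" "x \<in> D" by auto
      then have "x \<in> D \<inter> topspace Y" "D \<inter> topspace Y \<in> \<C>" using x by (auto simp: \<C>_def)
      then show "x \<in> \<Union>\<C>" by blast
    qed
  next
    fix C D assume "C \<in> \<C>" "D \<in> \<C>" "C \<noteq> D"
    then obtain C' D' where C': "C' \<in> \<D>" "C = C' \<inter> topspace Y" and D': "D' \<in> \<D>" "D = D' \<inter> topspace Y"
      by (auto simp: \<C>_def)
    show "C \<inter> D = {}"
    proof (rule ccontr)
      assume "C \<inter> D \<noteq> {}"
      then obtain x where x: "x \<in> C" "x \<in> D" by blast
      have "(C', x) \<in> topspace (sum_topology (subtopology Y) \<D>)" "(D', x) \<in> topspace (sum_topology (subtopology Y) \<D>)"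
        using C' D' x by auto
      then have "(C', x) = (D', x)" using inj_onD[OF inj] by (metis snd_conv)
      then have "C' = D'" by simp
      then show False using C' D' \<open>C \<noteq> D\<close> by simp
    qed
  next
    fix C assume "C \<in> \<C>"
    then obtain D where D: "D \<in> \<D>" "C = D \<inter> topspace Y" by (auto simp: \<C>_def)
    have "subtopology Y C = subtopology Y D" unfolding D(2) by (metis inf_commute subtopology_restrict)
    then show "C \<subseteq> topspace Y \<and> compact_space (subtopology Y C) \<and> Hausdorff_space (subtopology Y C)"
      using ch D by auto
  qed
qed



lemma dU_normal:
  assumes "disjoint_union_compact_Hausdorff Y"
  shows "normal_space Y \<and> Hausdorff_space Y"
proof -
  obtain \<C> where o: "\<And>C. C \<in> \<C> \<Longrightarrow> openin Y C" and c: "topspace Y \<subseteq> \<Union>\<C>"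
    and d: "\<And>C D. C \<in> \<C> \<Longrightarrow> D \<in> \<C> \<Longrightarrow> C \<noteq> D \<Longrightarrow> C \<inter> D = {}"
    and k: "\<And>C. C \<in> \<C> \<Longrightarrow> C \<subseteq> topspace Y \<and> compact_space (subtopology Y C) \<and> Hausdorff_space (subtopology Y C)"
    using disjoint_union_partition[OF assms] by metis
  show ?thesis
  proof (rule clopen_partition_normal_Hausdorff[OF o c d])
    fix C assume "C \<in> \<C>"
    then show "normal_space (subtopology Y C) \<and> Hausdorff_space (subtopology Y C)"
      using k compact_Hausdorff_or_regular_imp_normal_space by blast
  qed auto
qed

lemma simplex_top_ch: "compact_space (simplex_top n) \<and> Hausdorff_space (simplex_top n)"
proof
  show "compact_space (simplex_top n)"
    unfolding simplex_top_def by (rule compact_space_subtopology[OF compactin_standard_simplex])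
  have "Hausdorff_space (powertop_real (UNIV::nat set))"
    by (simp add: Hausdorff_space_product_topology)
  then show "Hausdorff_space (simplex_top n)"
    unfolding simplex_top_def by (rule Hausdorff_space_subtopology)
qed

lemma topspace_simplex_top [simp]: "topspace (simplex_top n) = standard_simplex n"
  by (simp add: simplex_top_def)

lemma cell_normal:
  assumes "disjoint_union_compact_Hausdorff Y"
  shows "normal_space (prod_topology (simplex_top n) Y) \<and> Hausdorff_space (prod_topology (simplex_top n) Y)"
proof -
  obtain \<C> where o: "\<And>C. C \<in> \<C> \<Longrightarrow> openin Y C" and c: "topspace Y \<subseteq> \<Union>\<C>"
    and d: "\<And>C D. C \<in> \<C> \<Longrightarrow> D \<in> \<C> \<Longrightarrow> C \<noteq> D \<Longrightarrow> C \<inter> D = {}"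
    and k: "\<And>C. C \<in> \<C> \<Longrightarrow> C \<subseteq> topspace Y \<and> compact_space (subtopology Y C) \<and> Hausdorff_space (subtopology Y C)"
    using disjoint_union_partition[OF assms] by metis
  define \<C>' where "\<C>' = (\<lambda>C. standard_simplex n \<times> C) ` \<C>"
  show ?thesis
  proof (rule clopen_partition_normal_Hausdorff[of \<C>'])
    fix E assume "E \<in> \<C>'"
    then obtain C where C: "C \<in> \<C>" "E = standard_simplex n \<times> C" by (auto simp: \<C>'_def)
    have "openin (simplex_top n) (standard_simplex n)" by (metis openin_topspace topspace_simplex_top)
    then show "openin (prod_topology (simplex_top n) Y) E"
      using C o by (simp add: openin_prod_Times_iff)
    have "subtopology (prod_topology (simplex_top n) Y) E = prod_topology (simplex_top n) (subtopology Y C)"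
      unfolding C(2) subtopology_Times by (metis subtopology_topspace topspace_simplex_top)
    moreover have "compact_space (prod_topology (simplex_top n) (subtopology Y C))"
      using k[OF C(1)] simplex_top_ch compact_space_prod_topology by blast
    moreover have "Hausdorff_space (prod_topology (simplex_top n) (subtopology Y C))"
      using k[OF C(1)] simplex_top_ch Hausdorff_space_prod_topology by blast
    ultimately show "normal_space (subtopology (prod_topology (simplex_top n) Y) E) \<and>
                     Hausdorff_space (subtopology (prod_topology (simplex_top n) Y) E)"
      using compact_Hausdorff_or_regular_imp_normal_space by metis
  next
    show "topspace (prod_topology (simplex_top n) Y) \<subseteq> \<Union>\<C>'"
      using c by (auto simp: \<C>'_def)
  next
    fix E F assume "E \<in> \<C>'" "F \<in> \<C>'" "E \<noteq> F"
    then obtain C D where "C \<in> \<C>" "D \<in> \<C>" "E = standard_simplex n \<times> C" "F = standard_simplex n \<times> D"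
      by (auto simp: \<C>'_def)
    then show "E \<inter> F = {}" using d \<open>E \<noteq> F\<close> by blast
  qed
qed

lemma boundary_closed:
  "closedin (prod_topology (simplex_top n) Y) (simplex_boundary n \<times> topspace Y)"
proof -
  have cl: "closedin (powertop_real (UNIV::nat set)) {x. x k = 0}" for k
  proof -
    have "closedin (powertop_real (UNIV::nat set)) {x \<in> topspace (powertop_real UNIV). x k \<in> {0}}"
      by (rule closedin_continuous_map_preimage[OF continuous_map_product_projection]) auto
    then show ?thesis by simp
  qed
  have "closedin (powertop_real (UNIV::nat set)) (\<Union>k\<in>{..n}. {x. x k = 0})"
    by (rule closedin_Union) (use cl in auto)
  then have "closedin (simplex_top n) (standard_simplex n \<inter> (\<Union>k\<in>{..n}. {x. x k = 0}))"
    unfolding simplex_top_def by (rule closedin_subtopology_Int_closed)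
  moreover have "standard_simplex n \<inter> (\<Union>k\<in>{..n}. {x. x k = 0}) = simplex_boundary n"
    by (auto simp: simplex_boundary_def)
  ultimately have "closedin (simplex_top n) (simplex_boundary n)" by simp
  then show ?thesis by (simp add: closedin_prod_Times_iff)
qed



lemma pushout_glue:
  fixes C :: "'a topology" and B :: "'b topology" and f :: "'b \<Rightarrow> 'a"
  assumes P: "top_pushout C B A f Z i j" and AB: "A \<subseteq> topspace B" and fA: "f ` A \<subseteq> topspace C"
    and g: "continuous_map C euclideanreal g" and h: "continuous_map B euclideanreal h"
    and agree: "\<And>a. a \<in> A \<Longrightarrow> h a = g (f a)"
  obtains k where "continuous_map Z euclideanreal k" "\<And>c. c \<in> topspace C \<Longrightarrow> k (i c) = g c"
    "\<And>b. b \<in> topspace B \<Longrightarrow> k (j b) = h b"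
proof -
  define R where "R = (\<lambda>u v. \<exists>a\<in>A. u = (Inl (f a) :: 'a + 'b) \<and> v = (Inr a :: 'a + 'b))"
  have ci: "continuous_map C Z i" and cj: "continuous_map B Z j"
    and opn: "\<And>U. U \<subseteq> topspace Z \<Longrightarrow> (openin Z U \<longleftrightarrow> openin C {x \<in> topspace C. i x \<in> U} \<and> openin B {x \<in> topspace B. j x \<in> U})"
    and fib: "\<And>u v. u \<in> topspace C <+> topspace B \<Longrightarrow> v \<in> topspace C <+> topspace B \<Longrightarrow>
        case_sum i j u = case_sum i j v \<longleftrightarrow> equivclp R u v"
    using P unfolding top_pushout_def R_def by blast+
  have key: "case_sum g h u = case_sum g h v" if "equivclp R u v" for u v
    using that
  proof (induction rule: equivclp_induct)
    case base
    then show ?case by simp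
  next
    case (step y z)
    have "case_sum g h y = case_sum g h z"
      using step(2) agree unfolding R_def by auto
    then show ?case using step(3) by simp
  qed
  have key2: "case_sum g h u = case_sum g h v"
    if "u \<in> topspace C <+> topspace B" "v \<in> topspace C <+> topspace B" "case_sum i j u = case_sum i j v" for u v
    using key fib that by blast
  define k where "k z = (if z \<in> i ` topspace C then g (inv_into (topspace C) i z) else h (inv_into (topspace B) j z))" for z
  have kc: "k (i c) = g c" if c: "c \<in> topspace C" for c
  proof -
    let ?c = "inv_into (topspace C) i (i c)"
    have "?c \<in> topspace C" "i ?c = i c" using c by (auto intro: inv_into_into f_inv_into_f)
    then have "case_sum g h (Inl ?c) = case_sum g h (Inl c)" using key2[of "Inl ?c" "Inl c"] c by auto
    then show ?thesis using c by (simp add: k_def)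
  qed
  have kb: "k (j b) = h b" if b: "b \<in> topspace B" for b
  proof (cases "j b \<in> i ` topspace C")
    case True
    then obtain c where c: "c \<in> topspace C" "j b = i c" by auto
    then have "case_sum g h (Inl c) = case_sum g h (Inr b)" using key2[of "Inl c" "Inr b"] b by auto
    then show ?thesis using c kc by simp
  next
    case False
    let ?b = "inv_into (topspace B) j (j b)"
    have "?b \<in> topspace B" "j ?b = j b" using b by (auto intro: inv_into_into f_inv_into_f)
    then have "case_sum g h (Inr ?b) = case_sum g h (Inr b)" using key2[of "Inr ?b" "Inr b"] b by auto
    then show ?thesis using False by (simp add: k_def)
  qed
  have "continuous_map Z euclideanreal k"
    unfolding continuous_map_def
  proof (intro conjI allI impI)
    show "k \<in> topspace Z \<rightarrow> topspace euclideanreal" by simp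
    fix U :: "real set" assume U: "openin euclideanreal U"
    let ?W = "{z \<in> topspace Z. k z \<in> U}"
    have iZ: "i c \<in> topspace Z" if "c \<in> topspace C" for c
      using continuous_map_image_subset_topspace[OF ci] that by blast
    have jZ: "j b \<in> topspace Z" if "b \<in> topspace B" for b
      using continuous_map_image_subset_topspace[OF cj] that by blast
    have e1: "{x \<in> topspace C. i x \<in> ?W} = {x \<in> topspace C. g x \<in> U}" using iZ kc by auto
    have e2: "{x \<in> topspace B. j x \<in> ?W} = {x \<in> topspace B. h x \<in> U}" using jZ kb by auto
    have "openin C {x \<in> topspace C. i x \<in> ?W}" unfolding e1 using openin_continuous_map_preimage[OF g U] .
    moreover have "openin B {x \<in> topspace B. j x \<in> ?W}" unfolding e2 using openin_continuous_map_preimage[OF h U] .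
    moreover have sub: "?W \<subseteq> topspace Z" by blast
    ultimately show "openin Z ?W" using opn[OF sub] by blast
  qed
  then show ?thesis using that kc kb by blast
qed



definition real_sep :: "'a topology \<Rightarrow> bool" where
  "real_sep X \<longleftrightarrow> (\<forall>x\<in>topspace X. \<forall>y\<in>topspace X. x \<noteq> y \<longrightarrow>
      (\<exists>g. continuous_map X euclideanreal g \<and> g x \<noteq> g y))"

lemma normal_Hausdorff_real_sep:
  assumes "normal_space X" "Hausdorff_space X"
  shows "real_sep X"
  unfolding real_sep_def
proof clarify
  fix x y assume x: "x \<in> topspace X" and y: "y \<in> topspace X" and "x \<noteq> y"
  have t1: "t1_space X" using assms Hausdorff_imp_t1_space by blast
  obtain u where u: "continuous_map X (top_of_set {0..1::real}) u" "u ` {x} \<subseteq> {0}" "u ` {y} \<subseteq> {1}"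
    using Urysohn_lemma[OF assms(1) closedin_t1_singleton[OF t1 x] closedin_t1_singleton[OF t1 y], of 0 1]
      \<open>x \<noteq> y\<close> by auto
  then have "continuous_map X euclideanreal u" using continuous_map_in_subtopology by blast
  moreover have "u x \<noteq> u y" using u by auto
  ultimately show "\<exists>g. continuous_map X euclideanreal g \<and> g x \<noteq> g y" by blast
qed

lemma real_sep_imp_Hausdorff:
  assumes "real_sep X" shows "Hausdorff_space X"
  unfolding Hausdorff_space_def
proof clarify
  fix x y assume x: "x \<in> topspace X" and y: "y \<in> topspace X" and "x \<noteq> y"
  obtain g where g: "continuous_map X euclideanreal g" "g x \<noteq> g y"
    using assms x y \<open>x \<noteq> y\<close> unfolding real_sep_def by blast
  show "\<exists>U V. openin X U \<and> openin X V \<and> x \<in> U \<and> y \<in> V \<and> disjnt U V"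
  proof (cases "g x < g y")
    case True
    define m where "m = (g x + g y) / 2"
    have "openin X {z \<in> topspace X. g z \<in> {..<m}}" "openin X {z \<in> topspace X. g z \<in> {m<..}}"
      by (rule openin_continuous_map_preimage[OF g(1)]; simp)+
    moreover have "x \<in> {z \<in> topspace X. g z \<in> {..<m}}" "y \<in> {z \<in> topspace X. g z \<in> {m<..}}"
      using x y True by (auto simp: m_def)
    moreover have "disjnt {z \<in> topspace X. g z \<in> {..<m}} {z \<in> topspace X. g z \<in> {m<..}}"
      by (auto simp: disjnt_def)
    ultimately show ?thesis by blast
  next
    case False
    then have F: "g y < g x" using g(2) by linarith
    define m where "m = (g x + g y) / 2"
    have "openin X {z \<in> topspace X. g z \<in> {m<..}}" "openin X {z \<in> topspace X. g z \<in> {..<m}}"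
      by (rule openin_continuous_map_preimage[OF g(1)]; simp)+
    moreover have "x \<in> {z \<in> topspace X. g z \<in> {m<..}}" "y \<in> {z \<in> topspace X. g z \<in> {..<m}}"
      using x y F by (auto simp: m_def)
    moreover have "disjnt {z \<in> topspace X. g z \<in> {m<..}} {z \<in> topspace X. g z \<in> {..<m}}"
      by (auto simp: disjnt_def)
    ultimately show ?thesis by blast
  qed
qed

locale stage =
  fixes C :: "'a topology" and B :: "'b topology" and A :: "'b set" and f :: "'b \<Rightarrow> 'a"
    and Z :: "'z topology" and i :: "'a \<Rightarrow> 'z" and j :: "'b \<Rightarrow> 'z"
  assumes P: "top_pushout C B A f Z i j"
    and nB: "normal_space B" and hB: "Hausdorff_space B" and cA: "closedin B A"
    and cf: "continuous_map (subtopology B A) C f"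
begin

lemma AB: "A \<subseteq> topspace B" using cA closedin_subset by blast

lemma fA: "f ` A \<subseteq> topspace C"
  using continuous_map_image_subset_topspace[OF cf] AB by (simp add: Int_absorb1)

lemma ij: "a \<in> A \<Longrightarrow> i (f a) = j a" using P unfolding top_pushout_def by blast

lemma topZ: "topspace Z = i ` topspace C \<union> j ` topspace B" using P unfolding top_pushout_def by blast

lemma ext:
  assumes g: "continuous_map C euclideanreal g"
  obtains k where "continuous_map Z euclideanreal k" "\<And>c. c \<in> topspace C \<Longrightarrow> k (i c) = g c"
proof -
  have "continuous_map (subtopology B A) euclideanreal (g \<circ> f)"
    using continuous_map_compose[OF cf g] .
  then obtain h where h: "continuous_map B euclideanreal h" "\<And>x. x \<in> A \<Longrightarrow> h x = (g \<circ> f) x"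
    using Tietze_extension_realinterval[OF nB cA, of UNIV "g \<circ> f"] by auto
  obtain k where "continuous_map Z euclideanreal k" "\<And>c. c \<in> topspace C \<Longrightarrow> k (i c) = g c"
    using pushout_glue[OF P AB fA g h(1)] h(2) by (metis comp_apply)
  then show ?thesis using that by blast
qed

lemma sep_cell:
  assumes b: "b \<in> topspace B" "b \<notin> A" and z: "z \<in> topspace Z" "z \<noteq> j b"
  shows "\<exists>k. continuous_map Z euclideanreal k \<and> k (j b) \<noteq> k z"
proof -
  have t1: "t1_space B" using hB Hausdorff_imp_t1_space by blast
  have cb: "closedin B {b}" using closedin_t1_singleton[OF t1 b(1)] .
  have gl: "\<exists>k. continuous_map Z euclideanreal k \<and> k (j b) \<noteq> k z"
    if S: "closedin B S" "A \<subseteq> S" "b \<notin> S" and zz: "z \<in> i ` topspace C \<or> z \<in> j ` S" for S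
  proof -
    obtain u where u: "continuous_map B (top_of_set {0..1::real}) u" "u ` S \<subseteq> {0}" "u ` {b} \<subseteq> {1}"
      using Urysohn_lemma[OF nB S(1) cb, of 0 1] S(3) by (auto simp: disjnt_def)
    then have cu: "continuous_map B euclideanreal u" using continuous_map_in_subtopology by blast
    have c0: "continuous_map C euclideanreal (\<lambda>_. 0)" by simp
    obtain k where k: "continuous_map Z euclideanreal k" "\<And>c. c \<in> topspace C \<Longrightarrow> k (i c) = 0"
      "\<And>x. x \<in> topspace B \<Longrightarrow> k (j x) = u x"
      using pushout_glue[OF P AB fA c0 cu] u(2) S(2) by blast
    have "k (j b) = 1" using k(3)[OF b(1)] u(3) by simp
    moreover have "k z = 0"
      using zz
    proof
      assume "z \<in> i ` topspace C" then show "k z = 0" using k(2) by blast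
    next
      assume "z \<in> j ` S"
      then obtain s where "s \<in> S" "z = j s" by blast
      then show "k z = 0" using k(3) u(2) S(1) closedin_subset by fastforce
    qed
    ultimately show ?thesis using k(1) by (intro exI[of _ k]) simp
  qed
  from z(1) topZ consider "z \<in> i ` topspace C" | b' where "b' \<in> topspace B" "z = j b'" by blast
  then show ?thesis
  proof cases
    case 1
    then show ?thesis using gl[of A] cA b by blast
  next
    case 2
    show ?thesis
    proof (cases "b' \<in> A")
      case True
      then have "z \<in> i ` topspace C" using 2 ij fA by (metis image_eqI subsetD)
      then show ?thesis using gl[of A] cA b by blast
    next
      case False
      have "b' \<noteq> b" using 2 z(2) by blast
      have "closedin B (A \<union> {b'})" using cA closedin_t1_singleton[OF t1 2(1)] by blast
      moreover have "z \<in> j ` (A \<union> {b'})" using 2 by blast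
      ultimately show ?thesis using gl[of "A \<union> {b'}"] b \<open>b' \<noteq> b\<close> by blast
    qed
  qed
qed

lemma sep_stage:
  assumes "real_sep C"
  shows "real_sep Z"
  unfolding real_sep_def
proof clarify
  fix x y assume x: "x \<in> topspace Z" and y: "y \<in> topspace Z" and "x \<noteq> y"
  have cover: "z \<in> i ` topspace C \<or> (\<exists>b. b \<in> topspace B \<and> b \<notin> A \<and> z = j b)"
    if z: "z \<in> topspace Z" for z
  proof -
    from z topZ consider "z \<in> i ` topspace C" | b where "b \<in> topspace B" "z = j b" by blast
    then show ?thesis
    proof cases
      case 1
      then show ?thesis by blast
    next
      case 2
      show ?thesis
      proof (cases "b \<in> A")
        case True
        then have "z = i (f b)" using 2 ij by simp
        moreover have "f b \<in> topspace C" using fA True by blast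
        ultimately show ?thesis by blast
      next
        case False
        then show ?thesis using 2 by blast
      qed
    qed
  qed
  have cellcase: "\<exists>k. continuous_map Z euclideanreal k \<and> k x \<noteq> k y"
    if nn: "\<not> (x \<in> i ` topspace C \<and> y \<in> i ` topspace C)"
  proof -
    have "(\<exists>b. b \<in> topspace B \<and> b \<notin> A \<and> x = j b) \<or> (\<exists>b. b \<in> topspace B \<and> b \<notin> A \<and> y = j b)"
      using cover[OF x] cover[OF y] nn by blast
    then show ?thesis
    proof
      assume "\<exists>b. b \<in> topspace B \<and> b \<notin> A \<and> x = j b"
      then obtain b where b: "b \<in> topspace B" "b \<notin> A" "x = j b" by blast
      obtain k where "continuous_map Z euclideanreal k" "k (j b) \<noteq> k y"
        using sep_cell[OF b(1,2) y] b(3) \<open>x \<noteq> y\<close> by blast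
      then show ?thesis using b(3) by blast
    next
      assume "\<exists>b. b \<in> topspace B \<and> b \<notin> A \<and> y = j b"
      then obtain b where b: "b \<in> topspace B" "b \<notin> A" "y = j b" by blast
      obtain k where "continuous_map Z euclideanreal k" "k (j b) \<noteq> k x"
        using sep_cell[OF b(1,2) x] b(3) \<open>x \<noteq> y\<close> by blast
      then show ?thesis using b(3) by (intro exI[of _ k]) simp
    qed
  qed
  show "\<exists>g. continuous_map Z euclideanreal g \<and> g x \<noteq> g y"
  proof (cases "x \<in> i ` topspace C \<and> y \<in> i ` topspace C")
    case True
    then obtain c1 c2 where c: "c1 \<in> topspace C" "c2 \<in> topspace C" "x = i c1" "y = i c2" by blast
    then have "c1 \<noteq> c2" using \<open>x \<noteq> y\<close> by blast
    then obtain g where g: "continuous_map C euclideanreal g" "g c1 \<noteq> g c2"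
      using assms c unfolding real_sep_def by blast
    obtain k where "continuous_map Z euclideanreal k" "\<And>c. c \<in> topspace C \<Longrightarrow> k (i c) = g c"
      using ext[OF g(1)] by blast
    then show ?thesis using c g(2) by (intro exI[of _ k]) simp
  next
    case False
    then show ?thesis using cellcase by blast
  qed
qed

end



theorem lemma2p19:
  fixes X :: "nat \<Rightarrow> 'a topology" and Y :: "nat \<Rightarrow> 'b topology"
    and f :: "nat \<Rightarrow> (nat \<Rightarrow> real) \<times> 'b \<Rightarrow> 'a" and i :: "nat \<Rightarrow> 'a \<Rightarrow> 'a"
    and \<Phi> :: "nat \<Rightarrow> (nat \<Rightarrow> real) \<times> 'b \<Rightarrow> 'a"
    and Xc :: "'c topology" and \<iota> :: "nat \<Rightarrow> 'a \<Rightarrow> 'c"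
  assumes "KW_cell_data X Y f i \<Phi>"
    and "top_seq_colimit X i Xc \<iota>"
  shows "Hausdorff_space Xc"
proof -
  have K: "disjoint_union_compact_Hausdorff (X 0) \<and>
     (\<forall>n. disjoint_union_compact_Hausdorff (Y (Suc n)) \<and>
          continuous_map
            (subtopology (prod_topology (simplex_top (Suc n)) (Y (Suc n)))
                         (simplex_boundary (Suc n) \<times> topspace (Y (Suc n))))
            (X n) (f (Suc n)) \<and>
          top_pushout (X n) (prod_topology (simplex_top (Suc n)) (Y (Suc n)))
            (simplex_boundary (Suc n) \<times> topspace (Y (Suc n))) (f (Suc n))
            (X (Suc n)) (i (Suc n)) (\<Phi> (Suc n)))"
    using assms(1) unfolding KW_cell_data_def .
  note K0 = conjunct1[OF K]
  note KS = conjunct2[OF K, rule_format]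
  note KSd = KS[THEN conjunct1] and KSc = KS[THEN conjunct2, THEN conjunct1] and KSp = KS[THEN conjunct2, THEN conjunct2]
  have st: "stage (X n) (prod_topology (simplex_top (Suc n)) (Y (Suc n)))
            (simplex_boundary (Suc n) \<times> topspace (Y (Suc n))) (f (Suc n))
            (X (Suc n)) (i (Suc n)) (\<Phi> (Suc n))" for n
  proof (rule stage.intro)
    show "top_pushout (X n) (prod_topology (simplex_top (Suc n)) (Y (Suc n)))
            (simplex_boundary (Suc n) \<times> topspace (Y (Suc n))) (f (Suc n))
            (X (Suc n)) (i (Suc n)) (\<Phi> (Suc n))" by (rule KSp)
    show "normal_space (prod_topology (simplex_top (Suc n)) (Y (Suc n)))"
      using cell_normal[OF KSd] by blast
    show "Hausdorff_space (prod_topology (simplex_top (Suc n)) (Y (Suc n)))"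
      using cell_normal[OF KSd] by blast
    show "closedin (prod_topology (simplex_top (Suc n)) (Y (Suc n)))
            (simplex_boundary (Suc n) \<times> topspace (Y (Suc n)))"
      by (rule boundary_closed)
    show "continuous_map
            (subtopology (prod_topology (simplex_top (Suc n)) (Y (Suc n)))
                         (simplex_boundary (Suc n) \<times> topspace (Y (Suc n))))
            (X n) (f (Suc n))" by (rule KSc)
  qed
  have sepX: "real_sep (X n)" for n
  proof (induction n)
    case 0
    then show ?case using dU_normal[OF K0] normal_Hausdorff_real_sep by blast
  next
    case (Suc n)
    then show ?case using stage.sep_stage[OF st] by blast
  qed
  have extX: "\<exists>k. continuous_map (X (Suc n)) euclideanreal k \<and> (\<forall>c\<in>topspace (X n). k (i (Suc n) c) = g c)"
    if gc: "continuous_map (X n) euclideanreal g" for n g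
  proof -
    obtain k where "continuous_map (X (Suc n)) euclideanreal k" "\<And>c. c \<in> topspace (X n) \<Longrightarrow> k (i (Suc n) c) = g c"
      using stage.ext[OF st gc] by blast
    then show ?thesis by blast
  qed
  have ci: "continuous_map (X n) (X (Suc n)) (i (Suc n))" for n
    using KSp[of n] unfolding top_pushout_def by (rule conjunct1)
  have T: "(\<forall>n. continuous_map (X n) Xc (\<iota> n)) \<and>
     (\<forall>n. \<forall>x\<in>topspace (X n). \<iota> (Suc n) (i (Suc n) x) = \<iota> n x) \<and>
     topspace Xc = (\<Union>n. \<iota> n ` topspace (X n)) \<and>
     (\<forall>n m x y. x \<in> topspace (X n) \<longrightarrow> y \<in> topspace (X m) \<longrightarrow> \<iota> n x = \<iota> m y \<longrightarrow>
        (\<exists>d e. n + d = m + e \<and> chain_map i n d x = chain_map i m e y)) \<and>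
     (\<forall>U. U \<subseteq> topspace Xc \<longrightarrow>
        (openin Xc U \<longleftrightarrow> (\<forall>n. openin (X n) {x \<in> topspace (X n). \<iota> n x \<in> U})))"
    using assms(2) unfolding top_seq_colimit_def .
  note c\<iota> = T[THEN conjunct1, rule_format]
  note comp = T[THEN conjunct2, THEN conjunct1, rule_format]
  note topXc = T[THEN conjunct2, THEN conjunct2, THEN conjunct1]
  note inj = T[THEN conjunct2, THEN conjunct2, THEN conjunct2, THEN conjunct1, rule_format]
  note opn = T[THEN conjunct2, THEN conjunct2, THEN conjunct2, THEN conjunct2, rule_format]
  have cm_cont: "continuous_map (X n) (X (n + d)) (chain_map i n d)" for n d
  proof (induction d)
    case 0
    then show ?case by simp
  next
    case (Suc d)
    have "continuous_map (X n) (X (Suc (n + d))) (i (Suc (n + d)) \<circ> chain_map i n d)"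
      using continuous_map_compose[OF Suc ci] .
    then show ?case by (simp add: o_def)
  qed
  have cm_top: "chain_map i n d x \<in> topspace (X (n + d))" if "x \<in> topspace (X n)" for n d x
    using continuous_map_image_subset_topspace[OF cm_cont[of n d]] that by blast
  have cm_iota: "\<iota> (n + d) (chain_map i n d x) = \<iota> n x" if x: "x \<in> topspace (X n)" for n d x
  proof (induction d)
    case 0
    then show ?case by simp
  next
    case (Suc d)
    have "\<iota> (Suc (n + d)) (i (Suc (n + d)) (chain_map i n d x)) = \<iota> (n + d) (chain_map i n d x)"
      using comp cm_top[OF x] by blast
    then show ?case using Suc by simp
  qed
  have "real_sep Xc"
    unfolding real_sep_def
  proof clarify
    fix z1 z2 assume z1: "z1 \<in> topspace Xc" and z2: "z2 \<in> topspace Xc" and "z1 \<noteq> z2"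
    obtain n1 x1 where x1: "x1 \<in> topspace (X n1)" "z1 = \<iota> n1 x1" using z1 topXc by blast
    obtain n2 x2 where x2: "x2 \<in> topspace (X n2)" "z2 = \<iota> n2 x2" using z2 topXc by blast
    define N where "N = n1 + n2"
    define y1 where "y1 = chain_map i n1 n2 x1"
    define y2 where "y2 = chain_map i n2 n1 x2"
    have NN: "n2 + n1 = N" by (simp add: N_def)
    have y1: "y1 \<in> topspace (X N)" "\<iota> N y1 = z1"
      using cm_top[OF x1(1), of n2] cm_iota[OF x1(1), of n2] x1(2) by (simp_all add: y1_def N_def)
    have y2: "y2 \<in> topspace (X N)" "\<iota> N y2 = z2"
      using cm_top[OF x2(1), of n1] cm_iota[OF x2(1), of n1] x2(2) NN by (simp_all add: y2_def)
    have "y1 \<noteq> y2" using y1 y2 \<open>z1 \<noteq> z2\<close> by blast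
    then obtain g0 where g0: "continuous_map (X N) euclideanreal g0" "g0 y1 \<noteq> g0 y2"
      using sepX[of N] y1 y2 unfolding real_sep_def by blast
    define Q where "Q k hk g' \<longleftrightarrow> continuous_map (X (Suc (N + k))) euclideanreal g' \<and>
       (\<forall>c\<in>topspace (X (N + k)). g' (i (Suc (N + k)) c) = hk c)" for k and hk g' :: "'a \<Rightarrow> real"
    define h where "h = rec_nat g0 (\<lambda>k hk. SOME g'. Q k hk g')"
    have h0: "h 0 = g0" by (simp add: h_def)
    have hS: "h (Suc k) = (SOME g'. Q k (h k) g')" for k by (simp add: h_def)
    have hc: "continuous_map (X (N + k)) euclideanreal (h k) \<and> Q k (h k) (h (Suc k))" for k
    proof (induction k)
      case 0
      have "\<exists>g'. Q 0 (h 0) g'" using extX[of N g0] g0(1) h0 by (simp add: Q_def)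
      then have "Q 0 (h 0) (h (Suc 0))" unfolding hS by (rule someI_ex)
      then show ?case using g0(1) h0 by simp
    next
      case (Suc k)
      then have c: "continuous_map (X (N + Suc k)) euclideanreal (h (Suc k))" by (simp add: Q_def)
      then have "\<exists>g'. Q (Suc k) (h (Suc k)) g'" using extX[of "N + Suc k" "h (Suc k)"] by (simp add: Q_def)
      then have "Q (Suc k) (h (Suc k)) (h (Suc (Suc k)))" unfolding hS[of "Suc k"] by (rule someI_ex)
      then show ?case using c by simp
    qed
    have hstep: "h (Suc k) (i (Suc (N + k)) c) = h k c" if "c \<in> topspace (X (N + k))" for k c
      using hc[of k] that unfolding Q_def by blast
    have hchain: "h (k + d) (chain_map i (N + k) d x) = h k x" if x: "x \<in> topspace (X (N + k))" for k d x
    proof (induction d)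
      case 0
      then show ?case by simp
    next
      case (Suc d)
      have t: "chain_map i (N + k) d x \<in> topspace (X (N + (k + d)))"
        using cm_top[OF x, of d] by (simp add: add.assoc)
      have "h (Suc (k + d)) (i (Suc (N + (k + d))) (chain_map i (N + k) d x)) = h (k + d) (chain_map i (N + k) d x)"
        using hstep[OF t] .
      then show ?case using Suc by (simp add: add.assoc)
    qed
    define G where "G z = (SOME v. \<exists>k x. x \<in> topspace (X (N + k)) \<and> \<iota> (N + k) x = z \<and> v = h k x)" for z
    have Gval: "G (\<iota> (N + k) x) = h k x" if x: "x \<in> topspace (X (N + k))" for k x
    proof -
      have "\<exists>v. \<exists>k' x'. x' \<in> topspace (X (N + k')) \<and> \<iota> (N + k') x' = \<iota> (N + k) x \<and> v = h k' x'"
        using x by blast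
      then have "\<exists>k' x'. x' \<in> topspace (X (N + k')) \<and> \<iota> (N + k') x' = \<iota> (N + k) x \<and> G (\<iota> (N + k) x) = h k' x'"
        unfolding G_def by (rule someI_ex)
      then obtain k' x' where k': "x' \<in> topspace (X (N + k'))" "\<iota> (N + k') x' = \<iota> (N + k) x"
        "G (\<iota> (N + k) x) = h k' x'" by blast
      obtain d e where de: "N + k' + d = N + k + e" "chain_map i (N + k') d x' = chain_map i (N + k) e x"
        using inj[OF k'(1) x k'(2)] by blast
      have "h k' x' = h (k' + d) (chain_map i (N + k') d x')" using hchain[OF k'(1)] by simp
      also have "\<dots> = h (k + e) (chain_map i (N + k) e x)" using de by simp
      also have "\<dots> = h k x" using hchain[OF x] by simp
      finally show ?thesis using k'(3) by simp
    qed
    have Gval2: "G (\<iota> n x) = h n (chain_map i n N x)" if x: "x \<in> topspace (X n)" for n x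
    proof -
      have t: "chain_map i n N x \<in> topspace (X (N + n))" using cm_top[OF x, of N] by (simp add: add.commute)
      have "\<iota> n x = \<iota> (N + n) (chain_map i n N x)" using cm_iota[OF x, of N] by (simp add: add.commute)
      then show ?thesis using Gval[OF t] by simp
    qed
    have contG: "continuous_map Xc euclideanreal G"
      unfolding continuous_map_def
    proof (intro conjI allI impI)
      show "G \<in> topspace Xc \<rightarrow> topspace euclideanreal" by simp
      fix U :: "real set" assume U: "openin euclideanreal U"
      let ?W = "{z \<in> topspace Xc. G z \<in> U}"
      have "openin (X n) {x \<in> topspace (X n). \<iota> n x \<in> ?W}" for n
      proof -
        have hn: "continuous_map (X (n + N)) euclideanreal (h n)" using hc[of n] by (simp add: add.commute)
        have "openin (X n) {x \<in> topspace (X n). (h n \<circ> chain_map i n N) x \<in> U}"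
          by (rule openin_continuous_map_preimage[OF continuous_map_compose[OF cm_cont hn] U])
        moreover have "{x \<in> topspace (X n). \<iota> n x \<in> ?W} = {x \<in> topspace (X n). (h n \<circ> chain_map i n N) x \<in> U}"
          using Gval2 continuous_map_image_subset_topspace[OF c\<iota>[of n]] by auto
        ultimately show ?thesis by simp
      qed
      moreover have "?W \<subseteq> topspace Xc" by blast
      ultimately show "openin Xc ?W" using opn by blast
    qed
    have "G z1 = g0 y1" using Gval[where k=0 and x=y1] y1 h0 by simp
    moreover have "G z2 = g0 y2" using Gval[where k=0 and x=y2] y2 h0 by simp
    ultimately show "\<exists>g. continuous_map Xc euclideanreal g \<and> g z1 \<noteq> g z2"
      using contG g0(2) by metis
  qed
  then show ?thesis by (rule real_sep_imp_Hausdorff)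
qed


end
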